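(* Let $n\ge 2$ and $1\le r\le n-1$. Then the $(r+1)$-component connectivity of the $n$-dimensional dual cube is $$c\kappa_{r+1}(D_n)=rn-\frac{r(r+1)}{2}+1.$$
   Context: The $n$-dimensional dual cube $D_n$ has vertex set all $(2n-1)$-bit binary strings $u_1u_2\cdots u_{2n-1}$. Two vertices $u,v$ are adjacent iff they differ in exactly one bit position $i$, and moreover: if $1\le i\le n-1$ then $u_{2n-1}=v_{2n-1}=0$; if $n\le i\le 2n-2$ then $u_{2n-1}=v_{2n-1}=1$; (if $i=2n-1$ there is no further condition). For a non-complete graph $G$ and integer $r\ge 2$, an $r$-component cut is a set $F\subseteq V(G)$ such that $G-F$ has at least $r$ connected components, and the $r$-component connectivity $c\kappa_r(G)$ is the minimum size of an $r$-component cut of $G$. *)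

theory Defs
  imports Main
begin

text \<open>Vertices of the dual cube D_n: binary strings u_1 ... u_{2n-1}, represented as
  bool lists of length 2n-1; bit position i (1-based) is list index i-1.\<close>

definition dc_verts :: "nat \<Rightarrow> bool list set" where
  "dc_verts n = {u. length u = 2*n - 1}"

definition dc_adj :: "nat \<Rightarrow> bool list \<Rightarrow> bool list \<Rightarrow> bool" where
  "dc_adj n u v \<longleftrightarrow> u \<in> dc_verts n \<and> v \<in> dc_verts n \<and>
     (\<exists>i. 1 \<le> i \<and> i \<le> 2*n - 1 \<and> u ! (i-1) \<noteq> v ! (i-1) \<and>
          (\<forall>j. 1 \<le> j \<and> j \<le> 2*n - 1 \<and> j \<noteq> i \<longrightarrow> u ! (j-1) = v ! (j-1)) \<and>
          (1 \<le> i \<and> i \<le> n - 1 \<longrightarrow> \<not> u ! (2*n-2) \<and> \<not> v ! (2*n-2)) \<and>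
          (n \<le> i \<and> i \<le> 2*n - 2 \<longrightarrow> u ! (2*n-2) \<and> v ! (2*n-2)))"

definition reach_in :: "('a \<Rightarrow> 'a \<Rightarrow> bool) \<Rightarrow> 'a set \<Rightarrow> 'a \<Rightarrow> 'a \<Rightarrow> bool" where
  "reach_in E S = (\<lambda>x y. x \<in> S \<and> y \<in> S \<and> E x y)\<^sup>*\<^sup>*"

definition components_in :: "('a \<Rightarrow> 'a \<Rightarrow> bool) \<Rightarrow> 'a set \<Rightarrow> 'a set set" where
  "components_in E S = (\<lambda>x. {y \<in> S. reach_in E S x y}) ` S"

definition is_comp_cut :: "'a set \<Rightarrow> ('a \<Rightarrow> 'a \<Rightarrow> bool) \<Rightarrow> nat \<Rightarrow> 'a set \<Rightarrow> bool" where
  "is_comp_cut V E r F \<longleftrightarrow> F \<subseteq> V \<and> finite (components_in E (V - F)) \<and>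
      card (components_in E (V - F)) \<ge> r"

definition comp_conn :: "'a set \<Rightarrow> ('a \<Rightarrow> 'a \<Rightarrow> bool) \<Rightarrow> nat \<Rightarrow> nat" where
  "comp_conn V E r = (LEAST k. \<exists>F. is_comp_cut V E r F \<and> card F = k)"

end

theory Submission
  imports Defs
begin

definition flip :: "nat \<Rightarrow> bool list \<Rightarrow> bool list" where
  "flip i v = v[i := (\<not> v ! i)]"

lemma length_flip[simp]: "length (flip i v) = length v"
  by (simp add: flip_def)

lemma nth_flip: "i < length v \<Longrightarrow> flip i v ! j = (if j = i then \<not> v ! i else v ! j)"
  by (simp add: flip_def nth_list_update)

lemma flip_neq: "i < length v \<Longrightarrow> flip i v \<noteq> v"
  by (metis nth_flip)

lemma flip_flip: "i < length v \<Longrightarrow> flip i (flip i v) = v"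
  by (simp add: flip_def)

lemma flip_inj: "i < length v \<Longrightarrow> j < length v \<Longrightarrow> flip i v = flip j v \<Longrightarrow> i = j"
  by (metis nth_flip)

definition nbI :: "nat set \<Rightarrow> bool list set \<Rightarrow> bool list set" where
  "nbI I S = {flip i v | v i. v \<in> S \<and> i \<in> I} - S"

lemma finite_nbI: "finite S \<Longrightarrow> finite I \<Longrightarrow> finite (nbI I S)"
proof -
  assume "finite S" "finite I"
  have "{flip i v | v i. v \<in> S \<and> i \<in> I} = (\<lambda>(v,i). flip i v) ` (S \<times> I)" by auto
  then show ?thesis using \<open>finite S\<close> \<open>finite I\<close> unfolding nbI_def by simp
qed

lemma ab_ineq: "1 \<le> (a::nat) \<Longrightarrow> 1 \<le> b \<Longrightarrow> a + b \<le> a * b + 1"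
  by (cases a; cases b) auto

lemma cube_iso:
  "finite S \<Longrightarrow> \<forall>v\<in>S. length v = L \<Longrightarrow> I \<subseteq> {..<L} \<Longrightarrow> 1 \<le> card S \<Longrightarrow> card S \<le> card I \<Longrightarrow>
   2 * card S * card I + 2 \<le> 2 * card (nbI I S) + card S * (card S + 1)"
proof (induction "card S" arbitrary: S I rule: less_induct)
  case less
  have finI: "finite I" using less.prems(3) finite_subset by blast
  show ?case
  proof (cases "card S = 1")
    case True
    then obtain v where Sv: "S = {v}" by (metis card_1_singletonE)
    have lv: "length v = L" using less.prems(2) Sv by auto
    have "nbI I S = (\<lambda>i. flip i v) ` I"
      using Sv less.prems(3) lv by (auto simp: nbI_def flip_neq)
    moreover have "inj_on (\<lambda>i. flip i v) I"
      using less.prems(3) lv by (auto simp: inj_on_def intro: flip_inj)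
    ultimately have "card (nbI I S) = card I" by (simp add: card_image)
    then show ?thesis using True by simp
  next
    case False
    then have "card S \<ge> 2" using less.prems(4) by linarith
    then obtain u v where uv: "u \<in> S" "v \<in> S" "u \<noteq> v"
      using card_le_Suc0_iff_eq[OF less.prems(1)] by force
    have "length u = L" "length v = L" using uv less.prems(2) by auto
    then obtain j where j: "j < L" "u ! j \<noteq> v ! j"
      using uv(3) nth_equalityI[of u v] by auto
    define S0 where "S0 = {s \<in> S. \<not> s ! j}"
    define S1 where "S1 = {s \<in> S. s ! j}"
    define I' where "I' = I - {j}"
    have finS0: "finite S0" and finS1: "finite S1" using less.prems(1) by (auto simp: S0_def S1_def)
    have S01: "S = S0 \<union> S1" "S0 \<inter> S1 = {}" by (auto simp: S0_def S1_def)
    have cardS: "card S = card S0 + card S1" using S01 finS0 finS1 card_Un_disjoint by metis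
    have ne0: "S0 \<noteq> {}" and ne1: "S1 \<noteq> {}" using uv j by (auto simp: S0_def S1_def)
    have c0: "card S0 \<ge> 1" using ne0 finS0 by (simp add: Suc_le_eq card_gt_0_iff)
    have c1: "card S1 \<ge> 1" using ne1 finS1 by (simp add: Suc_le_eq card_gt_0_iff)
    have cI': "card I \<le> card I' + 1"
      unfolding I'_def using finI by (cases "j \<in> I") (auto simp: card_Diff_singleton_if card_gt_0_iff)
    have lt0: "card S0 < card S" using cardS c1 by linarith
    have lt1: "card S1 < card S" using cardS c0 by linarith
    have le0: "card S0 \<le> card I'" using cardS c1 cI' less.prems(5) by linarith
    have le1: "card S1 \<le> card I'" using cardS c0 cI' less.prems(5) by linarith
    have L0: "\<forall>v\<in>S0. length v = L" "\<forall>v\<in>S1. length v = L" using less.prems(2) S01 by auto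
    have II: "I' \<subseteq> {..<L}" using less.prems(3) by (auto simp: I'_def)
    have IH0: "2 * card S0 * card I' + 2 \<le> 2 * card (nbI I' S0) + card S0 * (card S0 + 1)"
      by (rule less.hyps[OF lt0 finS0 L0(1) II c0 le0])
    have IH1: "2 * card S1 * card I' + 2 \<le> 2 * card (nbI I' S1) + card S1 * (card S1 + 1)"
      by (rule less.hyps[OF lt1 finS1 L0(2) II c1 le1])
    have sub: "nbI I' S0 \<union> nbI I' S1 \<subseteq> nbI I S"
    proof
      fix x assume "x \<in> nbI I' S0 \<union> nbI I' S1"
      then obtain s i where si: "x = flip i s" "s \<in> S" "i \<in> I" "i \<noteq> j"
         "(s \<in> S0 \<and> x \<notin> S0) \<or> (s \<in> S1 \<and> x \<notin> S1)"
        by (auto simp: nbI_def I'_def S0_def S1_def)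
      have "length s = L" using si less.prems(2) by auto
      then have "x ! j = s ! j" using si j less.prems(3) by (auto simp: nth_flip)
      then have "x \<notin> S" using si by (auto simp: S0_def S1_def)
      then show "x \<in> nbI I S" using si by (auto simp: nbI_def)
    qed
    have disj: "nbI I' S0 \<inter> nbI I' S1 = {}"
    proof -
      have "\<forall>x \<in> nbI I' S0. \<not> x ! j"
      proof
        fix x assume "x \<in> nbI I' S0"
        then obtain s i where "x = flip i s" "s \<in> S0" "i \<in> I" "i \<noteq> j"
          by (auto simp: nbI_def I'_def)
        moreover have "length s = L" using \<open>s \<in> S0\<close> less.prems(2) by (auto simp: S0_def)
        ultimately show "\<not> x ! j" using j less.prems(3) by (auto simp: nth_flip S0_def)
      qed
      moreover have "\<forall>x \<in> nbI I' S1. x ! j"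
      proof
        fix x assume "x \<in> nbI I' S1"
        then obtain s i where "x = flip i s" "s \<in> S1" "i \<in> I" "i \<noteq> j"
          by (auto simp: nbI_def I'_def)
        moreover have "length s = L" using \<open>s \<in> S1\<close> less.prems(2) by (auto simp: S1_def)
        ultimately show "x ! j" using j less.prems(3) by (auto simp: nth_flip S1_def)
      qed
      ultimately show ?thesis by blast
    qed
    have finN: "finite (nbI I S)" using finite_nbI less.prems(1) finI by blast
    have "card (nbI I' S0) + card (nbI I' S1) \<le> card (nbI I S)"
      using card_mono[OF finN sub] card_Un_disjoint[OF finite_subset finite_subset disj] sub finN
      by (metis le_sup_iff)
    moreover have "card S0 + card S1 \<le> card S0 * card S1 + 1" using ab_ineq c0 c1 by blast
    moreover have "card S * card I \<le> card S * card I' + card S"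
      using mult_le_mono2[OF cI', of "card S"] by (simp add: algebra_simps)
    moreover have "card S * card I' = card S0 * card I' + card S1 * card I'"
      using cardS by (simp add: algebra_simps)
    moreover have "card S * (card S + 1) = card S0 * (card S0 + 1) + card S1 * (card S1 + 1) + 2 * (card S0 * card S1)"
      using cardS by (simp add: algebra_simps)
    ultimately show ?thesis using IH0 IH1 cardS by linarith
  qed
qed


definition key :: "nat \<Rightarrow> bool list \<Rightarrow> bool \<times> bool list" where
  "key n v = (v!(2*n-2), if v!(2*n-2) then take (n-1) v else take (n-1) (drop (n-1) v))"

definition Icl :: "nat \<Rightarrow> bool \<Rightarrow> nat set" where
  "Icl n c = (if c then {n-1..<2*n-2} else {..<n-1})"

lemma Icl_sub: "n \<ge> 2 \<Longrightarrow> Icl n c \<subseteq> {..<2*n-2}"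
  by (auto simp: Icl_def)

lemma card_Icl: "n \<ge> 2 \<Longrightarrow> card (Icl n c) = n - 1"
  by (auto simp: Icl_def)

lemma adj_iff:
  assumes n: "n \<ge> 2"
  shows "dc_adj n u v \<longleftrightarrow> length u = 2*n-1 \<and>
     (v = flip (2*n-2) u \<or> (\<exists>i\<in>Icl n (u!(2*n-2)). v = flip i u))"
proof
  assume a: "dc_adj n u v"
  then have lu: "length u = 2*n-1" and lv: "length v = 2*n-1" by (auto simp: dc_adj_def dc_verts_def)
  from a obtain i where i: "1 \<le> i" "i \<le> 2*n-1" "u ! (i-1) \<noteq> v ! (i-1)"
    and oth: "\<forall>j. 1 \<le> j \<and> j \<le> 2*n - 1 \<and> j \<noteq> i \<longrightarrow> u ! (j-1) = v ! (j-1)"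
    and c1: "(1 \<le> i \<and> i \<le> n - 1 \<longrightarrow> \<not> u ! (2*n-2) \<and> \<not> v ! (2*n-2))"
    and c2: "(n \<le> i \<and> i \<le> 2*n - 2 \<longrightarrow> u ! (2*n-2) \<and> v ! (2*n-2))"
    unfolding dc_adj_def by blast
  have vf: "v = flip (i-1) u"
  proof (rule nth_equalityI)
    show "length v = length (flip (i-1) u)" using lu lv by simp
    fix j assume "j < length v"
    then have j: "j < 2*n-1" using lv by simp
    show "v ! j = flip (i-1) u ! j"
    proof (cases "j = i - 1")
      case True then show ?thesis using i lu by (auto simp: nth_flip)
    next
      case False
      then have "u ! j = v ! j" using oth[rule_format, of "j+1"] j by auto
      then show ?thesis using False i lu by (auto simp: nth_flip)
    qed
  qed
  show "length u = 2*n-1 \<and> (v = flip (2*n-2) u \<or> (\<exists>i\<in>Icl n (u!(2*n-2)). v = flip i u))"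
  proof (cases "i - 1 = 2*n-2")
    case True then show ?thesis using vf lu by simp
  next
    case False
    have "i - 1 \<in> Icl n (u!(2*n-2))"
    proof (cases "i \<le> n - 1")
      case True then show ?thesis using c1 i by (auto simp: Icl_def)
    next
      case False2: False
      then show ?thesis using c2 i False by (auto simp: Icl_def)
    qed
    then show ?thesis using vf lu by blast
  qed
next
  assume a: "length u = 2*n-1 \<and> (v = flip (2*n-2) u \<or> (\<exists>i\<in>Icl n (u!(2*n-2)). v = flip i u))"
  then have lu: "length u = 2*n-1" by simp
  obtain i where iv: "v = flip i u" and iL: "i < 2*n-1"
    and ic: "i \<noteq> 2*n-2 \<Longrightarrow> i \<in> Icl n (u!(2*n-2))"
  proof (cases "v = flip (2*n-2) u")
    case True then show ?thesis using that[of "2*n-2"] n by auto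
  next
    case False
    then obtain i where "i\<in>Icl n (u!(2*n-2))" "v = flip i u" using a by blast
    then show ?thesis using that[of i] Icl_sub[OF n] by force
  qed
  have lv: "length v = 2*n-1" using iv lu by simp
  have last: "i \<noteq> 2*n-2 \<Longrightarrow> v ! (2*n-2) = u ! (2*n-2)" using iv lu n iL by (auto simp: nth_flip)
  show "dc_adj n u v"
    unfolding dc_adj_def
  proof (intro conjI exI[of _ "i+1"])
    show "u \<in> dc_verts n" "v \<in> dc_verts n" using lu lv by (auto simp: dc_verts_def)
    show "1 \<le> i + 1" "i + 1 \<le> 2*n-1" using iL by auto
    show "u ! (i + 1 - 1) \<noteq> v ! (i + 1 - 1)" using iv lu iL by (simp add: nth_flip)
    show "\<forall>j. 1 \<le> j \<and> j \<le> 2 * n - 1 \<and> j \<noteq> i + 1 \<longrightarrow> u ! (j - 1) = v ! (j - 1)"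
      using iv lu iL by (auto simp: nth_flip)
    show "1 \<le> i + 1 \<and> i + 1 \<le> n - 1 \<longrightarrow> \<not> u ! (2 * n - 2) \<and> \<not> v ! (2 * n - 2)"
    proof
      assume h: "1 \<le> i + 1 \<and> i + 1 \<le> n - 1"
      then have "i \<noteq> 2*n-2" using n by linarith
      then show "\<not> u ! (2 * n - 2) \<and> \<not> v ! (2 * n - 2)" using ic last h by (auto simp: Icl_def split: if_splits)
    qed
    show "n \<le> i + 1 \<and> i + 1 \<le> 2 * n - 2 \<longrightarrow> u ! (2 * n - 2) \<and> v ! (2 * n - 2)"
      using ic last n by (auto simp: Icl_def split: if_splits)
  qed
qed

lemma adj_sym: "dc_adj n u v \<Longrightarrow> dc_adj n v u"
  unfolding dc_adj_def
  apply (elim conjE exE)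
  apply (intro conjI, assumption, assumption)
  apply (rule_tac x=i in exI)
  apply auto
  done

lemma key_flip:
  assumes n: "n \<ge> 2" and l: "length v = 2*n-1" and i: "i \<in> Icl n (v!(2*n-2))"
  shows "key n (flip i v) = key n v" "flip i v ! (2*n-2) = v ! (2*n-2)"
proof -
  have i2: "i < 2*n-2" using i Icl_sub[OF n] by blast
  show lst: "flip i v ! (2*n-2) = v ! (2*n-2)" using l i2 by (simp add: nth_flip)
  show "key n (flip i v) = key n v"
  proof (cases "v!(2*n-2)")
    case True
    then have "n - 1 \<le> i" using i by (simp add: Icl_def)
    then show ?thesis using lst True by (simp add: key_def flip_def)
  next
    case False
    then have "i < n - 1" using i by (simp add: Icl_def)
    then show ?thesis using lst False by (simp add: key_def flip_def)
  qed
qed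

lemma key_eq_nth:
  assumes n: "n \<ge> 2" and lu: "length u = 2*n-1" and lv: "length v = 2*n-1"
    and k: "key n u = key n v" and j: "j < 2*n-1" "j \<notin> Icl n (u!(2*n-2))"
  shows "u ! j = v ! j"
proof -
  have l: "u!(2*n-2) = v!(2*n-2)" using k by (simp add: key_def)
  show ?thesis
  proof (cases "j = 2*n-2")
    case True then show ?thesis using l by simp
  next
    case False
    show ?thesis
    proof (cases "u!(2*n-2)")
      case True
      then have "take (n-1) u = take (n-1) v" using k l by (simp add: key_def)
      moreover have "j < n - 1" using j True False by (auto simp: Icl_def)
      ultimately show ?thesis by (metis nth_take)
    next
      case F: False
      then have "take (n-1) (drop (n-1) u) = take (n-1) (drop (n-1) v)" using k l by (simp add: key_def)
      moreover have "n - 1 \<le> j" "j - (n-1) < n - 1" using j F False by (auto simp: Icl_def)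
      ultimately have "drop (n-1) u ! (j - (n-1)) = drop (n-1) v ! (j - (n-1))" by (metis nth_take)
      then show ?thesis using \<open>n - 1 \<le> j\<close> lu lv j by simp
    qed
  qed
qed

lemma cross_inj_key:
  assumes n: "n \<ge> 2" and lu: "length u = 2*n-1" and lv: "length v = 2*n-1"
    and k: "key n u = key n v" and kc: "key n (flip (2*n-2) u) = key n (flip (2*n-2) v)"
  shows "u = v"
proof (rule nth_equalityI)
  show "length u = length v" using lu lv by simp
  fix j assume "j < length u"
  then have j: "j < 2*n-1" using lu by simp
  show "u ! j = v ! j"
  proof (cases "j \<in> Icl n (u!(2*n-2))")
    case False then show ?thesis using key_eq_nth[OF n lu lv k j] by simp
  next
    case True
    have l: "u!(2*n-2) = v!(2*n-2)" using k by (simp add: key_def)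
    have lu': "length (flip (2*n-2) u) = 2*n-1" "length (flip (2*n-2) v) = 2*n-1" using lu lv by auto
    have "flip (2*n-2) u ! (2*n-2) = (\<not> u!(2*n-2))" using lu n by (simp add: nth_flip)
    then have "j \<notin> Icl n (flip (2*n-2) u ! (2*n-2))" using True n by (auto simp: Icl_def)
    then have "flip (2*n-2) u ! j = flip (2*n-2) v ! j" using key_eq_nth[OF n lu'(1) lu'(2) kc j(1)] by simp
    moreover have "j \<noteq> 2*n-2" using True Icl_sub[OF n] by blast
    ultimately show ?thesis using lu lv j by (simp add: nth_flip)
  qed
qed

lemma key_cross: "n \<ge> 2 \<Longrightarrow> length v = 2*n-1 \<Longrightarrow> fst (key n (flip (2*n-2) v)) = (\<not> fst (key n v))"
  by (simp add: key_def nth_flip)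


lemma finite_verts: "finite (dc_verts n)"
proof -
  have "dc_verts n = {xs. set xs \<subseteq> (UNIV::bool set) \<and> length xs = 2*n-1}" by (auto simp: dc_verts_def)
  then show ?thesis using finite_lists_length_eq[of "UNIV::bool set"] by simp
qed

definition NB :: "nat \<Rightarrow> bool list set \<Rightarrow> bool list set" where
  "NB n B = {w. \<exists>v\<in>B. dc_adj n v w} - B"

lemma NB_verts: "NB n B \<subseteq> dc_verts n"
  by (auto simp: NB_def dc_adj_def)

lemma finite_NB: "finite (NB n B)"
  using finite_subset[OF NB_verts finite_verts] .

lemma class_nb_sub:
  assumes n: "n \<ge> 2" and B: "B \<subseteq> dc_verts n"
  shows "nbI (Icl n c) {v\<in>B. v!(2*n-2) = c} \<subseteq> NB n B"
proof
  fix x assume "x \<in> nbI (Icl n c) {v\<in>B. v!(2*n-2) = c}"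
  then obtain v i where x: "x = flip i v" "v \<in> B" "v!(2*n-2) = c" "i \<in> Icl n c" "x \<notin> {v\<in>B. v!(2*n-2) = c}"
    by (auto simp: nbI_def)
  have lv: "length v = 2*n-1" using x B by (auto simp: dc_verts_def)
  have adj: "dc_adj n v x" using adj_iff[OF n] x lv by auto
  have "x ! (2*n-2) = c" using key_flip(2)[OF n lv] x by auto
  then have "x \<notin> B" using x by auto
  then show "x \<in> NB n B" using adj x by (auto simp: NB_def)
qed

lemma class_nb_last:
  assumes n: "n \<ge> 2" and B: "B \<subseteq> dc_verts n"
  shows "\<forall>x \<in> nbI (Icl n c) {v\<in>B. v!(2*n-2) = c}. x!(2*n-2) = c"
proof
  fix x assume "x \<in> nbI (Icl n c) {v\<in>B. v!(2*n-2) = c}"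
  then obtain v i where x: "x = flip i v" "v \<in> B" "v!(2*n-2) = c" "i \<in> Icl n c"
    by (auto simp: nbI_def)
  have lv: "length v = 2*n-1" using x B by (auto simp: dc_verts_def)
  show "x ! (2*n-2) = c" using key_flip(2)[OF n lv] x by auto
qed

lemma cube_cls:
  assumes n: "n \<ge> 2" and B: "B \<subseteq> dc_verts n" "finite B" and k: "1 \<le> card B" "card B \<le> n - 1"
  shows "2 * card B * (n-1) + 2 \<le> 2 * card (nbI (Icl n c) B) + card B * (card B + 1)"
proof -
  have "\<forall>v\<in>B. length v = 2*n-1" using B by (auto simp: dc_verts_def)
  moreover have "Icl n c \<subseteq> {..<2*n-1}" by (rule subset_trans[OF Icl_sub[OF n]]) auto
  ultimately show ?thesis using cube_iso[OF B(2), of "2*n-1" "Icl n c"] k card_Icl[OF n] by simp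
qed

lemma dn_small:
  assumes n: "n \<ge> 2" and B: "B \<subseteq> dc_verts n" and k: "1 \<le> card B" "card B \<le> n - 1"
  shows "2 * card B * n + 2 \<le> 2 * card (NB n B) + card B * (card B + 1)"
proof -
  have finB: "finite B" using finite_subset[OF B finite_verts] .
  define B0 where "B0 = {v\<in>B. v!(2*n-2) = False}"
  define B1 where "B1 = {v\<in>B. v!(2*n-2) = True}"
  define N0 where "N0 = nbI (Icl n False) B0"
  define N1 where "N1 = nbI (Icl n True) B1"
  have N0s: "N0 \<subseteq> NB n B" using class_nb_sub[OF n B, of False] by (simp add: N0_def B0_def)
  have N1s: "N1 \<subseteq> NB n B" using class_nb_sub[OF n B, of True] by (simp add: N1_def B1_def)
  have N0l: "\<forall>x\<in>N0. \<not> x!(2*n-2)" using class_nb_last[OF n B, of False] by (simp add: N0_def B0_def)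
  have N1l: "\<forall>x\<in>N1. x!(2*n-2)" using class_nb_last[OF n B, of True] by (simp add: N1_def B1_def)
  have B01: "B = B0 \<union> B1" "B0 \<inter> B1 = {}" by (auto simp: B0_def B1_def)
  have finB0: "finite B0" "finite B1" using finB by (auto simp: B0_def B1_def)
  have cB: "card B = card B0 + card B1" using B01 finB0 card_Un_disjoint by metis
  have B0v: "B0 \<subseteq> dc_verts n" "B1 \<subseteq> dc_verts n" using B by (auto simp: B0_def B1_def)
  have finN: "finite N0" "finite N1" using finite_subset[OF N0s finite_NB] finite_subset[OF N1s finite_NB] by auto
  show ?thesis
  proof (cases "B0 = {} \<or> B1 = {}")
    case True
    obtain c where Bc: "B = {v\<in>B. v!(2*n-2) = c}"
    proof (cases "B0 = {}")
      case T: True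
      have "B = {v\<in>B. v!(2*n-2) = True}"
      proof (intro set_eqI iffI)
        fix x assume "x \<in> B" then show "x \<in> {v\<in>B. v!(2*n-2) = True}" using T unfolding B0_def by blast
      qed simp
      then show ?thesis by (rule that)
    next
      case F: False
      then have T: "B1 = {}" using True by blast
      have "B = {v\<in>B. v!(2*n-2) = False}"
      proof (intro set_eqI iffI)
        fix x assume "x \<in> B" then show "x \<in> {v\<in>B. v!(2*n-2) = False}" using T unfolding B1_def by blast
      qed simp
      then show ?thesis by (rule that)
    qed
    define N where "N = nbI (Icl n c) B"
    define X where "X = (\<lambda>v. flip (2*n-2) v) ` B"
    have Ns: "N \<subseteq> NB n B" using class_nb_sub[OF n B, of c] Bc by (simp add: N_def)
    have Nl: "\<forall>x\<in>N. x!(2*n-2) = c" using class_nb_last[OF n B, of c] Bc by (simp add: N_def)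
    have Xs: "X \<subseteq> NB n B"
    proof
      fix x assume "x \<in> X"
      then obtain v where v: "v \<in> B" "x = flip (2*n-2) v" by (auto simp: X_def)
      have lv: "length v = 2*n-1" using v B by (auto simp: dc_verts_def)
      have "dc_adj n v x" using adj_iff[OF n] lv v by auto
      moreover have "x!(2*n-2) = (\<not> c)" using v lv n Bc by (auto simp: nth_flip)
      then have "x \<notin> B" using Bc by blast
      ultimately show "x \<in> NB n B" using v by (auto simp: NB_def)
    qed
    have Xl: "\<forall>x\<in>X. x!(2*n-2) = (\<not> c)"
    proof
      fix x assume "x \<in> X"
      then obtain v where v: "v \<in> B" "x = flip (2*n-2) v" by (auto simp: X_def)
      have lv: "length v = 2*n-1" using v B by (auto simp: dc_verts_def)
      show "x!(2*n-2) = (\<not> c)" using v lv n Bc by (auto simp: nth_flip)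
    qed
    have cX: "card X = card B"
      unfolding X_def
    proof (rule card_image, rule inj_onI)
      fix u v assume "u \<in> B" "v \<in> B" "flip (2*n-2) u = flip (2*n-2) v"
      moreover have "length u = 2*n-1" "length v = 2*n-1" using \<open>u\<in>B\<close> \<open>v\<in>B\<close> B by (auto simp: dc_verts_def)
      moreover have "2*n-2 < 2*n-1" using n by simp
      ultimately show "u = v" by (metis flip_flip)
    qed
    have disj: "N \<inter> X = {}" using Nl Xl by fastforce
    have finNX: "finite N" "finite X" using finite_subset[OF Ns finite_NB] finite_subset[OF Xs finite_NB] by auto
    have "card N + card X \<le> card (NB n B)"
      using card_mono[OF finite_NB, of "N \<union> X"] Ns Xs card_Un_disjoint[OF finNX disj] by simp
    moreover have "2 * card B * (n-1) + 2 \<le> 2 * card N + card B * (card B + 1)"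
      unfolding N_def by (rule cube_cls[OF n B finB k])
    moreover have "card B * n = card B * (n - 1) + card B" using n by (cases n) auto
    ultimately show ?thesis using cX by linarith
  next
    case False
    have a1: "1 \<le> card B0" "1 \<le> card B1" using False finB0 by (auto simp: Suc_le_eq card_gt_0_iff)
    have a2: "card B0 \<le> n - 1" "card B1 \<le> n - 1" using cB k a1 by auto
    have I0: "2 * card B0 * (n-1) + 2 \<le> 2 * card N0 + card B0 * (card B0 + 1)"
      unfolding N0_def by (rule cube_cls[OF n B0v(1) finB0(1) a1(1) a2(1)])
    have I1: "2 * card B1 * (n-1) + 2 \<le> 2 * card N1 + card B1 * (card B1 + 1)"
      unfolding N1_def by (rule cube_cls[OF n B0v(2) finB0(2) a1(2) a2(2)])
    have disj: "N0 \<inter> N1 = {}" using N0l N1l by blast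
    have "card N0 + card N1 \<le> card (NB n B)"
      using card_mono[OF finite_NB, of "N0 \<union> N1"] N0s N1s card_Un_disjoint[OF finN disj] by simp
    moreover have "card B0 + card B1 \<le> card B0 * card B1 + 1" using ab_ineq a1 by blast
    moreover have "card B * n = card B0 * (n - 1) + card B1 * (n-1) + card B0 + card B1"
      using n cB by (cases n) (auto simp: algebra_simps)
    moreover have "card B * (card B + 1) = card B0 * (card B0 + 1) + card B1 * (card B1 + 1) + 2 * (card B0 * card B1)"
      using cB by (simp add: algebra_simps)
    ultimately show ?thesis using I0 I1 by linarith
  qed
qed


lemma lin_cm2: "2*Zm + 2 \<le> 2*N + ZZ + z \<Longrightarrow> ZZ + z - 2 \<le> 2*Zm - 2*m \<Longrightarrow> m \<le> (N::int)"
  by linarith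

lemma lin_per2: "0 \<le> Zm - ZZ - m + z \<Longrightarrow> 2*Zm + 2 \<le> 2*N + ZZ + z \<Longrightarrow> z \<le> P + t - 1 \<Longrightarrow> N \<le> Fk
  \<Longrightarrow> m + 4 + Zm - 2 * t \<le> 2 * Fk + 2 * (P::int)"
  by linarith

lemma lin1: "(y::nat) + N \<le> Z + NN \<Longrightarrow> 2 * A + 2 \<le> 2 * N + (A + m) \<Longrightarrow> y = m \<Longrightarrow> A + m + 2 \<le> 2 * (NN + Z)"
  by presburger

lemma crux:
  assumes n: "n \<ge> 2" and finF: "finite F" and B: "B \<subseteq> dc_verts n" and BF: "B \<inter> F = {}"
    and h1: "\<forall>v\<in>B. \<forall>w. dc_adj n v w \<longrightarrow> w \<in> F \<or> w \<in> B"
    and h2: "\<forall>v\<in>B. key n v \<in> key n ` F"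
    and h3: "n - 1 \<le> card B"
  shows "(n-1)*n + 2 \<le> 2 * card F"
proof -
  define m where "m = n - 1"
  have m1: "m \<ge> 1" using n by (simp add: m_def)
  have nm: "n = m + 1" using n by (simp add: m_def)
  have finB: "finite B" using finite_subset[OF B finite_verts] .
  have lenB: "\<And>v. v \<in> B \<Longrightarrow> length v = 2*n-1" using B by (auto simp: dc_verts_def)
  define cr where "cr = (\<lambda>v::bool list. flip (2*n-2) v)"
  define KB where "KB = key n ` B"
  define t where "t = card KB"
  define Z where "Z = (\<lambda>k. {v\<in>B. key n v = k})"
  define Fk where "Fk = (\<lambda>k. {v\<in>F. key n v = k})"
  define P where "P = (\<lambda>k. cr ` Z k \<inter> F \<inter> {p. key n p \<notin> KB})"
  define NN where "NN = (\<lambda>k. nbI (Icl n (fst k)) (Z k))"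
  have finKB: "finite KB" using finB by (simp add: KB_def)
  have finZ: "\<And>k. finite (Z k)" using finB by (simp add: Z_def)
  have finFk: "\<And>k. finite (Fk k)" using finF by (simp add: Fk_def)
  have finP: "\<And>k. finite (P k)" using finF by (simp add: P_def)
  have cr_len: "\<And>v. length (cr v) = length v" by (simp add: cr_def)
  have cr_inv: "\<And>v. length v = 2*n-1 \<Longrightarrow> cr (cr v) = v" using n by (simp add: cr_def flip_flip)
  have cr_adj: "\<And>v. v \<in> B \<Longrightarrow> dc_adj n v (cr v)" using adj_iff[OF n] lenB by (auto simp: cr_def)
  have zpos: "\<And>k. k \<in> KB \<Longrightarrow> 1 \<le> card (Z k)"
  proof -
    fix k assume "k \<in> KB"
    then obtain v where "v \<in> B" "key n v = k" by (auto simp: KB_def)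
    then have "Z k \<noteq> {}" by (auto simp: Z_def)
    then show "1 \<le> card (Z k)" using finZ by (simp add: Suc_le_eq card_gt_0_iff)
  qed
  have NNsub: "\<And>k. NN k \<subseteq> Fk k"
  proof
    fix k x assume "x \<in> NN k"
    then obtain v i where x: "x = flip i v" "v \<in> Z k" "i \<in> Icl n (fst k)" "x \<notin> Z k"
      by (auto simp: NN_def nbI_def)
    have vB: "v \<in> B" and kv: "key n v = k" using x by (auto simp: Z_def)
    have lv: "length v = 2*n-1" using lenB vB by simp
    have "fst k = v!(2*n-2)" using kv by (auto simp: key_def)
    then have ic: "i \<in> Icl n (v!(2*n-2))" using x by simp
    have adj: "dc_adj n v x" using adj_iff[OF n] lv ic x by auto
    have kx: "key n x = k" using key_flip(1)[OF n lv ic] x kv by simp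
    have "x \<notin> B" using x kx by (auto simp: Z_def)
    then have "x \<in> F" using h1 vB adj by blast
    then show "x \<in> Fk k" using kx by (simp add: Fk_def)
  qed
  have Fkpos: "\<And>k. k \<in> KB \<Longrightarrow> 1 \<le> card (Fk k)"
  proof -
    fix k assume "k \<in> KB"
    then obtain v where "v \<in> B" "key n v = k" by (auto simp: KB_def)
    then obtain f where "f \<in> F" "key n f = k" using h2 by (metis imageE)
    then have "Fk k \<noteq> {}" by (auto simp: Fk_def)
    then show "1 \<le> card (Fk k)" using finFk by (simp add: Suc_le_eq card_gt_0_iff)
  qed
  have Pbound: "\<And>k. k \<in> KB \<Longrightarrow> card (Z k) \<le> card (P k) + (t - 1)"
  proof -
    fix k assume kK: "k \<in> KB"
    define X where "X = cr ` Z k"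
    have injZ: "inj_on cr (Z k)"
    proof (rule inj_onI)
      fix u v assume "u \<in> Z k" "v \<in> Z k" "cr u = cr v"
      then show "u = v" using cr_inv lenB by (metis (no_types, lifting) Z_def mem_Collect_eq)
    qed
    have cX: "card X = card (Z k)" using card_image[OF injZ] by (simp add: X_def)
    have finX: "finite X" using finZ by (simp add: X_def)
    have PX: "P k \<subseteq> X" by (auto simp: P_def X_def)
    have injK: "inj_on (key n) (X - P k)"
    proof (rule inj_onI)
      fix p q assume p: "p \<in> X - P k" and q: "q \<in> X - P k" and e: "key n p = key n q"
      obtain u where u: "u \<in> Z k" "p = cr u" using p by (auto simp: X_def)
      obtain v where v: "v \<in> Z k" "q = cr v" using q by (auto simp: X_def)
      have lu: "length u = 2*n-1" "length v = 2*n-1" using u v lenB by (auto simp: Z_def)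
      have "key n u = key n v" using u v by (simp add: Z_def)
      then have "u = v" using cross_inj_key[OF n lu(1) lu(2)] e u v by (simp add: cr_def)
      then show "p = q" using u v by simp
    qed
    have imK: "key n ` (X - P k) \<subseteq> KB - {k}"
    proof
      fix y assume "y \<in> key n ` (X - P k)"
      then obtain p where p: "p \<in> X - P k" "y = key n p" by auto
      obtain u where u: "u \<in> Z k" "p = cr u" using p by (auto simp: X_def)
      have uB: "u \<in> B" and ku: "key n u = k" using u by (auto simp: Z_def)
      have lu: "length u = 2*n-1" using lenB uB by simp
      have "p \<in> F \<or> p \<in> B" using h1 uB cr_adj[OF uB] u by blast
      then have "key n p \<in> KB"
      proof
        assume "p \<in> F"
        then show "key n p \<in> KB" using p(1) u by (auto simp: P_def X_def)
      qed (simp add: KB_def)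
      moreover have "key n p \<noteq> k" using key_cross[OF n lu] u ku by (metis cr_def)
      ultimately show "y \<in> KB - {k}" using p by simp
    qed
    have "card (X - P k) \<le> t - 1"
    proof -
      have "card (X - P k) = card (key n ` (X - P k))" using card_image[OF injK] by simp
      also have "\<dots> \<le> card (KB - {k})" using card_mono[OF _ imK] finKB by simp
      also have "\<dots> = t - 1" using kK finKB by (simp add: t_def)
      finally show ?thesis .
    qed
    moreover have "card X \<le> card (P k) + card (X - P k)"
      using card_Un_le[of "P k" "X - P k"] PX by (metis Un_Diff_cancel2 Un_absorb1 Un_commute)
    ultimately show "card (Z k) \<le> card (P k) + (t - 1)" using cX by linarith
  qed
  have cube: "\<And>k. k \<in> KB \<Longrightarrow> card (Z k) \<le> n - 1 \<Longrightarrow>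
      2 * card (Z k) * (n-1) + 2 \<le> 2 * card (NN k) + card (Z k) * (card (Z k) + 1)"
  proof -
    fix k assume "k \<in> KB" "card (Z k) \<le> n - 1"
    moreover have "Z k \<subseteq> dc_verts n" using B by (auto simp: Z_def)
    ultimately show "2 * card (Z k) * (n-1) + 2 \<le> 2 * card (NN k) + card (Z k) * (card (Z k) + 1)"
      unfolding NN_def using cube_cls[OF n _ finZ zpos] by blast
  qed
  have big: "\<And>k. k \<in> KB \<Longrightarrow> n - 1 \<le> card (Z k) \<Longrightarrow>
      (n-1)*n + 2 \<le> 2 * (card (NN k) + card (Z k))"
  proof -
    fix k assume kK: "k \<in> KB" and zb: "n - 1 \<le> card (Z k)"
    obtain Y where Y: "Y \<subseteq> Z k" "card Y = n - 1" "finite Y" using obtain_subset_with_card_n[OF zb] by metis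
    have Yv: "Y \<subseteq> dc_verts n" using Y(1) B by (auto simp: Z_def)
    have Y1: "1 \<le> card Y" using Y n by simp
    have cY: "2 * card Y * (n-1) + 2 \<le> 2 * card (nbI (Icl n (fst k)) Y) + card Y * (card Y + 1)"
      using cube_cls[OF n Yv Y(3) Y1] Y(2) by simp
    have sub: "Y \<union> nbI (Icl n (fst k)) Y \<subseteq> Z k \<union> NN k"
      using Y(1) by (auto simp: NN_def nbI_def)
    have d1: "Y \<inter> nbI (Icl n (fst k)) Y = {}" by (auto simp: nbI_def)
    have d2: "Z k \<inter> NN k = {}" by (auto simp: NN_def nbI_def)
    have finNN: "finite (NN k)" using finite_subset[OF NNsub finFk] .
    have finNY: "finite (nbI (Icl n (fst k)) Y)" using finite_nbI[OF Y(3)] Icl_sub[OF n] finite_subset by (metis finite_lessThan)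
    have "card Y + card (nbI (Icl n (fst k)) Y) \<le> card (Z k) + card (NN k)"
      using card_mono[OF _ sub] card_Un_disjoint[OF Y(3) finNY d1] card_Un_disjoint[OF finZ finNN d2] finZ finNN
      by (metis finite_UnI)
    moreover have "2*(m*m) + 2 \<le> 2*card (nbI (Icl n (fst k)) Y) + (m*m + m)"
    proof -
      have nm1: "n - 1 = m" by (simp add: m_def)
      have cYm: "card Y = m" using Y(2) nm1 by simp
      show ?thesis using cY unfolding cYm nm1 by (simp add: algebra_simps)
    qed
    moreover have "card Y = m" using Y(2) by (simp add: m_def)
    ultimately have "m*m + m + 2 \<le> 2 * (card (NN k) + card (Z k))"
      by (rule lin1)
    moreover have "(n-1)*n = m*m + m" using nm by simp
    ultimately show "(n-1)*n + 2 \<le> 2 * (card (NN k) + card (Z k))" by simp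
  qed
  have sumZ: "(\<Sum>k\<in>KB. card (Z k)) = card B"
  proof -
    have "B = (\<Union>k\<in>KB. Z k)" by (auto simp: KB_def Z_def)
    moreover have "card (\<Union>k\<in>KB. Z k) = (\<Sum>k\<in>KB. card (Z k))"
      by (rule card_UN_disjoint) (auto simp: finKB finB Z_def)
    ultimately show ?thesis by simp
  qed
  define c where "c = (\<lambda>k. card (Fk k) + card (P k))"
  have sumc: "(\<Sum>k\<in>KB. c k) \<le> card F"
  proof -
    define W where "W = (\<lambda>k. Fk k \<union> P k)"
    have dW: "\<forall>i\<in>KB. \<forall>j\<in>KB. i \<noteq> j \<longrightarrow> W i \<inter> W j = {}"
    proof (intro ballI impI)
      fix i j assume ij: "i \<in> KB" "j \<in> KB" "i \<noteq> j"
      show "W i \<inter> W j = {}"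
      proof (rule ccontr)
        assume "W i \<inter> W j \<noteq> {}"
        then obtain x where x: "x \<in> W i" "x \<in> W j" by blast
        have "x \<in> P i \<and> x \<in> P j"
          using x ij by (auto simp: W_def Fk_def P_def)
        then obtain u v where u: "u \<in> Z i" "x = cr u" and v: "v \<in> Z j" "x = cr v"
          by (auto simp: P_def)
        have "length u = 2*n-1" "length v = 2*n-1" using u v lenB by (auto simp: Z_def)
        then have "u = v" using cr_inv u v by metis
        then show False using u v ij by (auto simp: Z_def)
      qed
    qed
    have cW: "\<And>k. k \<in> KB \<Longrightarrow> card (W k) = c k"
    proof -
      fix k assume "k \<in> KB"
      then have "Fk k \<inter> P k = {}" by (auto simp: Fk_def P_def)
      then show "card (W k) = c k" using card_Un_disjoint[OF finFk finP] by (simp add: W_def c_def)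
    qed
    have "(\<Sum>k\<in>KB. c k) = card (\<Union>k\<in>KB. W k)"
      using card_UN_disjoint[OF finKB _ dW] finFk finP cW by (simp add: W_def)
    also have "\<dots> \<le> card F" by (rule card_mono[OF finF]) (auto simp: W_def Fk_def P_def)
    finally show ?thesis .
  qed
  have cNN: "\<And>k. card (NN k) \<le> card (Fk k)" using card_mono[OF finFk NNsub] by blast
  have t1: "1 \<le> t"
  proof -
    have "B \<noteq> {}" using h3 n finB by auto
    then have "KB \<noteq> {}" by (simp add: KB_def)
    then show ?thesis using finKB by (simp add: t_def Suc_le_eq card_gt_0_iff)
  qed
  show ?thesis
  proof (cases "\<exists>k0\<in>KB. n - 1 \<le> card (Z k0)")
    case True
    then obtain k0 where k0: "k0 \<in> KB" "n - 1 \<le> card (Z k0)" by blast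
    have "(\<Sum>k\<in>KB. c k) = c k0 + (\<Sum>k\<in>KB - {k0}. c k)" using sum.remove[OF finKB k0(1)] by simp
    moreover have "(\<Sum>k\<in>KB - {k0}. c k) \<ge> (\<Sum>k\<in>KB - {k0}. 1)"
    proof (rule sum_mono)
      fix k assume "k \<in> KB - {k0}"
      then show "1 \<le> c k" using Fkpos[of k] by (simp add: c_def)
    qed
    moreover have "(\<Sum>k\<in>KB - {k0}. (1::nat)) = t - 1" using k0 finKB by (simp add: t_def)
    moreover have "card (NN k0) + card (Z k0) \<le> c k0 + (t - 1)"
      using Pbound[OF k0(1)] cNN[of k0] by (simp add: c_def)
    ultimately have "card (NN k0) + card (Z k0) \<le> card F" using sumc by linarith
    then have "2 * (card (NN k0) + card (Z k0)) \<le> 2 * card F" by simp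
    then show ?thesis using order_trans[OF big[OF k0]] by blast
  next
    case False
    then have small: "\<And>k. k \<in> KB \<Longrightarrow> card (Z k) \<le> n - 2" by force
    have nm1: "n - 1 = m" by (simp add: m_def)
    have smallm: "\<And>k. k \<in> KB \<Longrightarrow> card (Z k) + 1 \<le> m"
    proof -
      fix k assume "k \<in> KB"
      then have "card (Z k) \<le> n - 2" by (rule small)
      then show "card (Z k) + 1 \<le> m" using nm m1 by linarith
    qed
    have cubem: "\<And>k. k \<in> KB \<Longrightarrow> 2 * int (card (Z k)) * int m + 2 \<le> 2 * int (card (NN k)) + int (card (Z k)) * (int (card (Z k)) + 1)"
    proof -
      fix k assume kK: "k \<in> KB"
      have "2 * card (Z k) * m + 2 \<le> 2 * card (NN k) + card (Z k) * (card (Z k) + 1)"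
        using cube[OF kK] smallm[OF kK] nm1 by simp
      then have "int (2 * card (Z k) * m + 2) \<le> int (2 * card (NN k) + card (Z k) * (card (Z k) + 1))"
        by (simp only: of_nat_le_iff)
      then show "2 * int (card (Z k)) * int m + 2 \<le> 2 * int (card (NN k)) + int (card (Z k)) * (int (card (Z k)) + 1)"
        by (simp add: algebra_simps)
    qed
    have cm: "\<And>k. k \<in> KB \<Longrightarrow> m \<le> c k"
    proof -
      fix k assume kK: "k \<in> KB"
      define z where "z = card (Z k)"
      have z1: "1 \<le> z" "z + 1 \<le> m" using zpos[OF kK] smallm[OF kK] by (auto simp: z_def)
      have Ci: "2 * int z * int m + 2 \<le> 2 * int (card (NN k)) + int z * (int z + 1)"
        using cubem[OF kK] by (simp add: z_def)
      have Pm: "(int z - 1)*(int z + 2) \<le> (int z - 1)*(2*int m)"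
        using z1 by (intro mult_left_mono) auto
      have C1: "2*(int z*int m) + 2 \<le> 2*int (card (NN k)) + int z*int z + int z"
        using Ci by (simp add: algebra_simps)
      have C2: "int z*int z + int z - 2 \<le> 2*(int z*int m) - 2*int m"
        using Pm by (simp add: algebra_simps)
      have "int m \<le> int (card (NN k))" using C1 C2 by (rule lin_cm2)
      then show "m \<le> c k" using cNN[of k] by (simp add: c_def)
    qed
    show ?thesis
    proof (cases "m * (m + 1) + 2 \<le> 2 * t * m")
      case True
      have "(\<Sum>k\<in>KB. m) \<le> (\<Sum>k\<in>KB. c k)" by (rule sum_mono, rule cm, assumption)
      then have "t * m \<le> card F" using sumc by (simp add: t_def)
      then have "m * (m + 1) + 2 \<le> 2 * card F" using True by linarith
      then show ?thesis using nm1 nm by simp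
    next
      case False
      have t2: "2 * t \<le> m + 2"
      proof (rule ccontr)
        assume "\<not> ?thesis"
        then have "m + 3 \<le> 2 * t" by linarith
        then have "(m + 3) * m \<le> 2 * t * m" by (rule mult_right_mono) simp
        then show False using False m1 by (simp add: algebra_simps)
      qed
      have per: "\<And>k. k \<in> KB \<Longrightarrow> int m + 4 + int (card (Z k)) * int m - 2 * int t \<le> 2 * int (c k)"
      proof -
        fix k assume kK: "k \<in> KB"
        define z where "z = card (Z k)"
        have z1: "1 \<le> z" "z + 1 \<le> m" using zpos[OF kK] smallm[OF kK] by (auto simp: z_def)
        have Ci: "2 * int z * int m + 2 \<le> 2 * int (card (NN k)) + int z * (int z + 1)"
          using cubem[OF kK] by (simp add: z_def)
        have pb: "z \<le> card (P k) + (t - 1)" using Pbound[OF kK] by (simp add: z_def)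
        have pb': "int z \<le> int (card (P k)) + int t - 1" using pb t1 by linarith
        have nf: "int (card (NN k)) \<le> int (card (Fk k))" using cNN[of k] by simp
        have Q: "0 \<le> (int z - 1) * (int m - int z)" using z1 by (intro mult_nonneg_nonneg) auto
        have Q': "0 \<le> int z*int m - int z*int z - int m + int z" using Q by (simp add: algebra_simps)
        have C1: "2*(int z*int m) + 2 \<le> 2*int (card (NN k)) + int z*int z + int z"
          using Ci by (simp add: algebra_simps)
        have "int m + 4 + int z*int m - 2 * int t \<le> 2 * int (card (Fk k)) + 2 * int (card (P k))"
          by (rule lin_per2[OF Q' C1 pb' nf])
        then show "int m + 4 + int (card (Z k)) * int m - 2 * int t \<le> 2 * int (c k)"
          by (simp add: c_def z_def algebra_simps)
      qed
      have S1: "(\<Sum>k\<in>KB. int m + 4 + int (card (Z k)) * int m - 2 * int t) \<le> (\<Sum>k\<in>KB. 2 * int (c k))"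
        by (rule sum_mono) (rule per)
      have S2: "(\<Sum>k\<in>KB. int m + 4 + int (card (Z k)) * int m - 2 * int t)
          = int t * int m + 4 * int t - 2 * (int t * int t) + int (card B) * int m"
      proof -
        have "(\<Sum>k\<in>KB. int m + 4 + int (card (Z k)) * int m - 2 * int t)
            = (\<Sum>k\<in>KB. (int m + 4 - 2 * int t) + int (card (Z k)) * int m)"
          by (rule sum.cong) auto
        also have "\<dots> = (\<Sum>k\<in>KB. int m + 4 - 2 * int t) + (\<Sum>k\<in>KB. int (card (Z k)) * int m)"
          by (rule sum.distrib)
        also have "\<dots> = int t * (int m + 4 - 2 * int t) + (\<Sum>k\<in>KB. int (card (Z k))) * int m"
          by (simp add: t_def sum_distrib_right)
        also have "(\<Sum>k\<in>KB. int (card (Z k))) = int (card B)" using sumZ by (metis of_nat_sum)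
        finally show ?thesis by (simp add: algebra_simps)
      qed
      have S3: "(\<Sum>k\<in>KB. 2 * int (c k)) \<le> 2 * int (card F)"
      proof -
        have "(\<Sum>k\<in>KB. 2 * int (c k)) = 2 * int (\<Sum>k\<in>KB. c k)" by (simp add: sum_distrib_left)
        moreover have "int (\<Sum>k\<in>KB. c k) \<le> int (card F)" using sumc by (simp only: of_nat_le_iff)
        ultimately show ?thesis by linarith
      qed
      have S4: "int m * int m \<le> int (card B) * int m"
        using h3 nm1 by (intro mult_right_mono) auto
      have S5: "0 \<le> (int t - 1) * (int m + 2 - 2 * int t)" using t1 t2 by (intro mult_nonneg_nonneg) auto
      have S5': "0 \<le> int t * int m + 4 * int t - 2 * (int t * int t) - int m - 2" using S5 by (simp add: algebra_simps)
      have "int m * int m + int m + 2 \<le> 2 * int (card F)"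
        using S1 S2 S3 S4 S5' by linarith
      then have "int (m * m + m + 2) \<le> int (2 * card F)" by simp
      then have "m * m + m + 2 \<le> 2 * card F" by (simp only: of_nat_le_iff)
      then show ?thesis using nm1 nm by (simp add: algebra_simps)
    qed
  qed
qed


lemma reach_sym:
  assumes sym: "\<And>x y. E x y \<Longrightarrow> E y x" and r: "reach_in E S x y"
  shows "reach_in E S y x"
  using r unfolding reach_in_def
proof (induction rule: rtranclp_induct)
  case base then show ?case by simp
next
  case (step y z)
  then have "(\<lambda>x y. x \<in> S \<and> y \<in> S \<and> E x y) z y" using sym by blast
  then show ?case using step.IH by (rule converse_rtranclp_into_rtranclp)
qed

lemma reach_trans: "reach_in E S x y \<Longrightarrow> reach_in E S y z \<Longrightarrow> reach_in E S x z"
  unfolding reach_in_def by (rule rtranclp_trans)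

lemma reach_step: "x \<in> S \<Longrightarrow> y \<in> S \<Longrightarrow> E x y \<Longrightarrow> reach_in E S x y"
  unfolding reach_in_def by (rule r_into_rtranclp) simp

lemma reach_refl: "reach_in E S x x"
  unfolding reach_in_def by simp

lemma reach_isolated:
  assumes iso: "\<And>w. E x w \<Longrightarrow> w \<notin> S" and r: "reach_in E S x y"
  shows "y = x"
  using r unfolding reach_in_def
  by (cases rule: converse_rtranclpE) (use iso in auto)

lemma cluster_path:
  assumes n: "n \<ge> 2"
  shows "u \<in> dc_verts n \<Longrightarrow> v \<in> dc_verts n \<Longrightarrow> key n u = key n v \<Longrightarrow>
    (\<forall>w\<in>dc_verts n. key n w = key n v \<longrightarrow> w \<in> S) \<Longrightarrow> reach_in (dc_adj n) S u v"
proof (induction "card {j. j < 2*n-1 \<and> u!j \<noteq> v!j}" arbitrary: u rule: less_induct)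
  case (less u)
  have lu: "length u = 2*n-1" and lv: "length v = 2*n-1" using less.prems by (auto simp: dc_verts_def)
  show ?case
  proof (cases "{j. j < 2*n-1 \<and> u!j \<noteq> v!j} = {}")
    case True
    then have "u = v" using lu lv by (intro nth_equalityI) auto
    then show ?thesis by (simp add: reach_refl)
  next
    case False
    then obtain j where j: "j < 2*n-1" "u!j \<noteq> v!j" by blast
    have jI: "j \<in> Icl n (u!(2*n-2))" using key_eq_nth[OF n lu lv less.prems(3) j(1)] j by blast
    define u' where "u' = flip j u"
    have lu': "length u' = 2*n-1" using lu by (simp add: u'_def)
    have u'V: "u' \<in> dc_verts n" using lu' by (simp add: dc_verts_def)
    have ku': "key n u' = key n v" using key_flip(1)[OF n lu jI] less.prems(3) by (simp add: u'_def)
    have adj: "dc_adj n u u'" using adj_iff[OF n] lu jI by (auto simp: u'_def)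
    have D: "{j'. j' < 2*n-1 \<and> u'!j' \<noteq> v!j'} = {j'. j' < 2*n-1 \<and> u!j' \<noteq> v!j'} - {j}"
      using lu j by (auto simp: u'_def nth_flip)
    have "card {j'. j' < 2*n-1 \<and> u'!j' \<noteq> v!j'} < card {j. j < 2*n-1 \<and> u!j \<noteq> v!j}"
      unfolding D by (rule card_Diff1_less) (use j in auto)
    then have r: "reach_in (dc_adj n) S u' v" using less.hyps[OF _ u'V less.prems(2) ku' less.prems(4)] by blast
    have "u \<in> S" "u' \<in> S" using less.prems ku' u'V by auto
    then have "reach_in (dc_adj n) S u u'" using adj by (rule reach_step)
    then show ?thesis using r by (rule reach_trans)
  qed
qed

lemma key_app:
  assumes n: "n \<ge> 2" and x: "length x = n - 1" and y: "length y = n - 1"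
  shows "key n (x @ y @ [c]) = (c, if c then x else y)"
    "x @ y @ [c] \<in> dc_verts n"
    "(x @ y @ [c]) ! (2*n-2) = c"
    "flip (2*n-2) (x @ y @ [c]) = x @ y @ [\<not> c]"
proof -
  have i: "2*n-2 = length x + length y" using x y n by simp
  show l: "(x @ y @ [c]) ! (2*n-2) = c" unfolding i by (simp add: nth_append)
  show "key n (x @ y @ [c]) = (c, if c then x else y)" using l x y by (simp add: key_def)
  show "x @ y @ [c] \<in> dc_verts n" using x y n by (simp add: dc_verts_def)
  show "flip (2*n-2) (x @ y @ [c]) = x @ y @ [\<not> c]"
    unfolding flip_def l unfolding i by (simp add: list_update_append)
qed

lemma pow_bound: "m * (m + 1) < 2 * 2 ^ m"
proof (induction m)
  case 0 then show ?case by simp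
next
  case (Suc m)
  have "Suc m \<le> 2 ^ m" using less_exp[of m] by (simp add: Suc_le_eq)
  then show ?case using Suc by (simp add: algebra_simps)
qed

lemma untouched:
  assumes n: "n \<ge> 2" and F: "card F < 2 ^ (n-1)" "finite F"
  shows "\<exists>l. length l = n - 1 \<and> (c, l) \<notin> key n ` F"
proof (rule ccontr)
  assume "\<not> ?thesis"
  then have sub: "{l::bool list. set l \<subseteq> UNIV \<and> length l = n - 1} \<subseteq> snd ` key n ` F"
  proof (intro subsetI)
    fix l :: "bool list" assume "\<nexists>l. length l = n - 1 \<and> (c, l) \<notin> key n ` F" "l \<in> {l. set l \<subseteq> UNIV \<and> length l = n - 1}"
    then have "(c, l) \<in> key n ` F" by auto
    then show "l \<in> snd ` key n ` F" by (metis image_eqI snd_conv)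
  qed
  have "card {l::bool list. set l \<subseteq> UNIV \<and> length l = n - 1} = 2 ^ (n-1)"
    using card_lists_length_eq[of "UNIV::bool set" "n-1"] by simp
  moreover have "card (snd ` key n ` F) \<le> card F"
    using card_image_le[OF F(2), of "key n"] card_image_le[of "key n ` F" snd] F(2) by simp
  ultimately have "2 ^ (n-1) \<le> card F" using card_mono[OF _ sub] F(2) by (metis finite_imageI le_trans)
  then show False using F(1) by simp
qed


lemma card_le_diff1: "finite A \<Longrightarrow> card A \<le> card (A - {x}) + 1"
  by (cases "x \<in> A") (auto simp: card_Diff_singleton_if card_gt_0_iff)

lemma lin_F: "\<not> (A + 2 \<le> 2*F + R) \<Longrightarrow> A \<le> X + R \<Longrightarrow> 2*F \<le> X + (1::nat)"
  by linarith

lemma par_F: "2*F \<le> 2*q + 1 \<Longrightarrow> F \<le> (q::nat)"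
  by presburger

lemma lin_rn: "0 \<le> MM + M + RR - R - 2*RM \<Longrightarrow> A = 2*RM + 2*R \<Longrightarrow> Bv = MM + M + RR + R \<Longrightarrow> A \<le> (Bv::int)"
  by linarith

lemma lin_mono: "0 \<le> 2*KN - KK - K - 2*RN + RR + R \<Longrightarrow> A = 2*RN + KK + K \<Longrightarrow> Bv = 2*KN + RR + R \<Longrightarrow> A \<le> (Bv::int)"
  by linarith

lemma lower:
  assumes n: "n \<ge> 2" and r: "1 \<le> r" "r \<le> n - 1" and FV: "F \<subseteq> dc_verts n"
    and cc: "r + 1 \<le> card (components_in (dc_adj n) (dc_verts n - F))"
  shows "2 * r * n + 2 \<le> 2 * card F + r * (r + 1)"
proof (rule ccontr)
  assume neg: "\<not> ?thesis"
  define V where "V = dc_verts n"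
  define E where "E = dc_adj n"
  define S where "S = V - F"
  have finV: "finite V" using finite_verts by (simp add: V_def)
  have finF: "finite F" using finite_subset[OF FV finite_verts] .
  have symE: "\<And>x y. E x y \<Longrightarrow> E y x" using adj_sym by (simp add: E_def)
  define m where "m = n - 1"
  have nm: "n = m + 1" using n by (simp add: m_def)
  have rm: "r \<le> m" using r by (simp add: m_def)
  have rn: "2 * r * n \<le> n * (n - 1) + r * (r + 1)"
  proof -
    have p: "0 \<le> (int m + 1 - int r) * (int m - int r)" using rm by (intro mult_nonneg_nonneg) auto
    have "int (2 * r * (m+1)) \<le> int ((m+1) * m + r * (r + 1))"
    proof (rule lin_rn)
      show "0 \<le> int m * int m + int m + int r * int r - int r - 2 * (int r * int m)"
        using p by (simp add: algebra_simps)
      show "int (2 * r * (m + 1)) = 2 * (int r * int m) + 2 * int r" by (simp add: algebra_simps)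
      show "int ((m + 1) * m + r * (r + 1)) = int m * int m + int m + int r * int r + int r"
        by (simp add: algebra_simps)
    qed
    then have "2 * r * (m+1) \<le> (m+1) * m + r * (r + 1)" by (simp only: of_nat_le_iff)
    then show ?thesis by (simp add: nm)
  qed
  have Fsmall: "card F < 2 ^ (n - 1)"
  proof -
    have f1: "2 * card F \<le> n * (n - 1) + 1" using lin_F[OF neg rn] .
    have "even (n * (n - 1))" by (cases n) auto
    then obtain q where q: "n * (n - 1) = 2 * q" by (rule evenE)
    have "card F \<le> q" using f1 unfolding q by (rule par_F)
    moreover have "(n - 1) * (n - 1 + 1) < 2 * 2 ^ (n - 1)" by (rule pow_bound)
    moreover have "(n - 1) * (n - 1 + 1) = n * (n - 1)" using n by simp
    ultimately show ?thesis using q by linarith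
  qed
  obtain x0 where x0: "length x0 = n - 1" "(True, x0) \<notin> key n ` F" using untouched[OF n Fsmall finF] by blast
  obtain y0 where y0: "length y0 = n - 1" "(False, y0) \<notin> key n ` F" using untouched[OF n Fsmall finF] by blast
  define v0 where "v0 = x0 @ y0 @ [False]"
  define M where "M = {y \<in> S. reach_in E S v0 y}"
  define B where "B = S - M"
  have clus: "\<And>a b. a \<in> V \<Longrightarrow> b \<in> V \<Longrightarrow> key n a = key n b \<Longrightarrow> key n b \<notin> key n ` F \<Longrightarrow> reach_in E S a b"
  proof -
    fix a b assume "a \<in> V" "b \<in> V" "key n a = key n b" "key n b \<notin> key n ` F"
    moreover have "\<forall>w\<in>dc_verts n. key n w = key n b \<longrightarrow> w \<in> S"
      using \<open>key n b \<notin> key n ` F\<close> by (auto simp: S_def V_def) (metis image_eqI)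
    ultimately show "reach_in E S a b" using cluster_path[OF n] by (simp add: E_def V_def)
  qed
  have crossE: "\<And>x y c. length x = n - 1 \<Longrightarrow> length y = n - 1 \<Longrightarrow> x@y@[c] \<in> S \<Longrightarrow> x@y@[\<not>c] \<in> S
       \<Longrightarrow> reach_in E S (x@y@[c]) (x@y@[\<not>c])"
  proof -
    fix x y c assume xy: "length x = n - 1" "length y = n - 1" "x@y@[c] \<in> S" "x@y@[\<not>c] \<in> S"
    have "E (x@y@[c]) (x@y@[\<not>c])"
      using adj_iff[OF n, of "x@y@[c]" "x@y@[\<not>c]"] key_app[OF n xy(1) xy(2), of c] xy
      by (auto simp: E_def dc_verts_def)
    then show "reach_in E S (x@y@[c]) (x@y@[\<not>c])" using xy by (intro reach_step)
  qed
  have inS: "\<And>w. w \<in> V \<Longrightarrow> key n w \<notin> key n ` F \<Longrightarrow> w \<in> S" by (auto simp: S_def)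
  have U: "\<And>w. w \<in> V \<Longrightarrow> key n w \<notin> key n ` F \<Longrightarrow> reach_in E S v0 w"
  proof -
    fix w assume wV: "w \<in> V" and wk: "key n w \<notin> key n ` F"
    have lw: "length w = 2*n-1" using wV by (simp add: V_def dc_verts_def)
    show "reach_in E S v0 w"
    proof (cases "w ! (2*n-2)")
      case False
      define y where "y = take (n-1) (drop (n-1) w)"
      have ly: "length y = n - 1" using lw n by (simp add: y_def)
      have kw: "key n w = (False, y)" using False by (simp add: key_def y_def)
      note ka = key_app[OF n x0(1) ly] key_app[OF n x0(1) y0(1)]
      have r1: "reach_in E S (x0@y@[False]) w"
        using clus[OF ka(2)[of False, unfolded V_def[symmetric]] wV] ka(1)[of False] kw wk by simp
      have r2: "reach_in E S (x0@y@[True]) (x0@y@[False])"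
        using crossE[OF x0(1) ly, of True] inS ka(2)[of True, unfolded V_def[symmetric]] ka(2)[of False, unfolded V_def[symmetric]]
          ka(1) kw wk x0(2) by auto
      have r3: "reach_in E S (x0@y0@[True]) (x0@y@[True])"
        using clus[OF ka(6)[of True, unfolded V_def[symmetric]] ka(2)[of True, unfolded V_def[symmetric]]] ka(1) ka(5) x0(2) by simp
      have r4: "reach_in E S (x0@y0@[False]) (x0@y0@[True])"
        using crossE[OF x0(1) y0(1), of False] inS ka(6)[of True, unfolded V_def[symmetric]] ka(6)[of False, unfolded V_def[symmetric]]
          ka(5) x0(2) y0(2) by auto
      show ?thesis unfolding v0_def using reach_trans[OF r4 reach_trans[OF r3 reach_trans[OF r2 r1]]] .
    next
      case True
      define x where "x = take (n-1) w"
      have lx: "length x = n - 1" using lw n by (simp add: x_def)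
      have kw: "key n w = (True, x)" using True by (simp add: key_def x_def)
      note ka = key_app[OF n lx y0(1)] key_app[OF n x0(1) y0(1)]
      have r1: "reach_in E S (x@y0@[True]) w"
        using clus[OF ka(2)[of True, unfolded V_def[symmetric]] wV] ka(1)[of True] kw wk by simp
      have r2: "reach_in E S (x@y0@[False]) (x@y0@[True])"
        using crossE[OF lx y0(1), of False] inS ka(2)[of True, unfolded V_def[symmetric]] ka(2)[of False, unfolded V_def[symmetric]]
          ka(1) kw wk y0(2) by auto
      have r3: "reach_in E S (x0@y0@[False]) (x@y0@[False])"
        using clus[OF ka(6)[of False, unfolded V_def[symmetric]] ka(2)[of False, unfolded V_def[symmetric]]] ka(1) ka(5) y0(2) by simp
      show ?thesis unfolding v0_def using reach_trans[OF r3 reach_trans[OF r2 r1]] .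
    qed
  qed
  have h1: "\<forall>v\<in>B. \<forall>w. dc_adj n v w \<longrightarrow> w \<in> F \<or> w \<in> B"
  proof (intro ballI allI impI)
    fix v w assume vB: "v \<in> B" and a: "dc_adj n v w"
    have wV: "w \<in> V" using a by (simp add: dc_adj_def V_def)
    show "w \<in> F \<or> w \<in> B"
    proof (rule ccontr)
      assume "\<not> (w \<in> F \<or> w \<in> B)"
      then have wS: "w \<in> S" and wM: "w \<in> M" using wV by (auto simp: S_def B_def)
      have vS: "v \<in> S" using vB by (simp add: B_def)
      have "reach_in E S w v" using reach_step[OF wS vS] symE a by (simp add: E_def)
      then have "reach_in E S v0 v" using wM reach_trans by (auto simp: M_def)
      then show False using vB vS by (simp add: B_def M_def)
    qed
  qed
  have h2: "\<forall>v\<in>B. key n v \<in> key n ` F"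
  proof
    fix v assume vB: "v \<in> B"
    then have "v \<in> V" "v \<notin> M" by (auto simp: B_def S_def)
    then show "key n v \<in> key n ` F" using U inS by (auto simp: M_def)
  qed
  have BV: "B \<subseteq> dc_verts n" and BF: "B \<inter> F = {}" by (auto simp: B_def S_def V_def)
  have finB: "finite B" using finite_subset[OF BV finite_verts] .
  define comp where "comp = (\<lambda>x. {y \<in> S. reach_in E S x y})"
  have comps: "components_in (dc_adj n) (dc_verts n - F) = comp ` S"
    by (simp add: components_in_def comp_def S_def V_def E_def)
  have compM: "\<And>x. x \<in> M \<Longrightarrow> comp x = M"
  proof -
    fix x assume "x \<in> M"
    then have rx: "reach_in E S v0 x" by (simp add: M_def)
    have rx': "reach_in E S x v0" using reach_sym[OF symE rx] .
    show "comp x = M" unfolding comp_def M_def using reach_trans[OF rx] reach_trans[OF rx'] by blast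
  qed
  have "comp ` S - {M} \<subseteq> comp ` B"
  proof
    fix C assume "C \<in> comp ` S - {M}"
    then obtain x where x: "x \<in> S" "C = comp x" "C \<noteq> M" by blast
    then have "x \<notin> M" using compM by blast
    then have "x \<in> B" using x(1) by (simp add: B_def)
    then show "C \<in> comp ` B" using x(2) by (rule rev_image_eqI)
  qed
  then have "card (comp ` S - {M}) \<le> card (comp ` B)" by (rule card_mono[OF finite_imageI[OF finB]])
  also have "\<dots> \<le> card B" by (rule card_image_le[OF finB])
  finally have "card (comp ` S - {M}) \<le> card B" .
  moreover have "card (comp ` S) \<le> card (comp ` S - {M}) + 1"
    by (rule card_le_diff1) (use finV in \<open>simp add: S_def\<close>)
  moreover have "r + 1 \<le> card (comp ` S)" using cc unfolding comps .
  ultimately have Br: "r \<le> card B" by linarith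
  show False
  proof (cases "n - 1 \<le> card B")
    case True
    have "(n-1)*n + 2 \<le> 2 * card F" using crux[OF n finF BV BF h1 h2 True] .
    moreover have "(n-1)*n = n*(n-1)" by simp
    ultimately show False using neg rn by linarith
  next
    case False
    have k1: "1 \<le> card B" "card B \<le> n - 1" using Br r False by auto
    have ds: "2 * card B * n + 2 \<le> 2 * card (NB n B) + card B * (card B + 1)" using dn_small[OF n BV k1] .
    have "NB n B \<subseteq> F" using h1 by (auto simp: NB_def)
    then have nf: "card (NB n B) \<le> card F" using card_mono[OF finF] by blast
    have mono: "2 * r * n + card B * (card B + 1) \<le> 2 * card B * n + r * (r + 1)"
    proof -
      have p: "0 \<le> (int (card B) - int r) * (2 * int n - int (card B) - int r - 1)"
        using Br False by (intro mult_nonneg_nonneg) auto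
      have "int (2 * r * n + card B * (card B + 1)) \<le> int (2 * card B * n + r * (r + 1))"
      proof (rule lin_mono)
        show "0 \<le> 2 * (int (card B) * int n) - int (card B) * int (card B) - int (card B) - 2 * (int r * int n) + int r * int r + int r"
          using p by (simp add: algebra_simps)
        show "int (2 * r * n + card B * (card B + 1)) = 2 * (int r * int n) + int (card B) * int (card B) + int (card B)"
          by (simp add: algebra_simps)
        show "int (2 * card B * n + r * (r + 1)) = 2 * (int (card B) * int n) + int r * int r + int r"
          by (simp add: algebra_simps)
      qed
      then show ?thesis by (simp only: of_nat_le_iff)
    qed
    show False using neg ds nf mono by linarith
  qed
qed


lemma flip_comm: "i < length u \<Longrightarrow> j < length u \<Longrightarrow> flip j (flip i u) = flip i (flip j u)"
  by (rule nth_equalityI) (auto simp: nth_flip)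

lemma sum_ident: "r \<le> n - 1 \<Longrightarrow> 2 * (\<Sum>i<r. n - 2 - i) + r * (r + 3) = 2 * r * (n::nat)"
proof (induction r)
  case 0 then show ?case by simp
next
  case (Suc r)
  then have IH: "2 * (\<Sum>i<r. n - 2 - i) + r * (r + 3) = 2 * r * n" by simp
  define d where "d = n - (r + 2)"
  have d: "n = r + 2 + d" using Suc.prems by (simp add: d_def)
  have e: "n - 2 - r = d" using d by simp
  define s where "s = (\<Sum>i<r. n - 2 - i)"
  have IH': "2 * s + r * (r + 3) = 2 * r * n" using IH by (simp add: s_def)
  have "(\<Sum>i<Suc r. n - 2 - i) = s + d" using e by (simp add: s_def)
  moreover have "2 * (s + d) + Suc r * (Suc r + 3) = 2 * Suc r * n"
    using IH' unfolding d by (simp add: algebra_simps)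
  ultimately show ?case by simp
qed

lemma lin_up: "2*s + RR3 = A \<Longrightarrow> RR3 = RR1 + 2*r \<Longrightarrow> c \<le> 1 + r + s \<Longrightarrow> 2*c + RR1 \<le> A + (2::nat)"
  by linarith

lemma upper:
  assumes n: "n \<ge> 2" and r: "1 \<le> r" "r \<le> n - 1"
  shows "\<exists>F. is_comp_cut (dc_verts n) (dc_adj n) (r + 1) F \<and> 2 * card F + r * (r + 1) \<le> 2 * r * n + 2"
proof -
  define L where "L = 2*n-1"
  define V where "V = dc_verts n"
  define E where "E = dc_adj n"
  define u0 where "u0 = replicate L False"
  define w where "w = (\<lambda>i. flip i u0)"
  define F0 where "F0 = (\<Union>i\<in>{..<r}. {x. dc_adj n (w i) x})"
  define S where "S = V - F0"
  have lu0: "length u0 = L" by (simp add: u0_def)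
  have rL: "r < L" "n - 1 \<le> 2*n-3" "2*n-3 < L" "2*n-2 < L" "2*n-3 \<noteq> 2*n-2" using r n by (auto simp: L_def)
  have rk: "\<And>k. k < r \<Longrightarrow> k < L \<and> k \<noteq> 2*n-3 \<and> k \<noteq> 2*n-2 \<and> k < n - 1" using r n by (auto simp: L_def)
  have nth_w: "\<And>i p. i < L \<Longrightarrow> p < L \<Longrightarrow> w i ! p = (p = i)"
    using lu0 by (auto simp: w_def nth_flip u0_def)
  have nth_fw: "\<And>i j p. i < L \<Longrightarrow> j < L \<Longrightarrow> p < L \<Longrightarrow> flip j (w i) ! p = ((p = i) \<noteq> (p = j))"
    using lu0 by (auto simp: w_def nth_flip u0_def)
  have lw: "\<And>i. length (w i) = L" using lu0 by (simp add: w_def)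
  have wV: "\<And>i. w i \<in> V" using lw by (simp add: V_def dc_verts_def L_def)
  have wlast: "\<And>i. i < r \<Longrightarrow> w i ! (2*n-2) = False"
  proof -
    fix i assume "i < r"
    then have "i < L" "i \<noteq> 2*n-2" using r rL n by auto
    then show "w i ! (2*n-2) = False" using nth_w[of i "2*n-2"] rL by simp
  qed
  have nbr: "\<And>i x. i < r \<Longrightarrow> dc_adj n (w i) x \<Longrightarrow> x = flip (2*n-2) (w i) \<or> (\<exists>j<n-1. x = flip j (w i))"
  proof -
    fix i x assume i: "i < r" and a: "dc_adj n (w i) x"
    then show "x = flip (2*n-2) (w i) \<or> (\<exists>j<n-1. x = flip j (w i))"
      using adj_iff[OF n] wlast[OF i] by (auto simp: Icl_def)
  qed
  have F0V: "F0 \<subseteq> V" by (auto simp: F0_def V_def dc_adj_def)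
  have finF0: "finite F0" using finite_subset[OF F0V] finite_verts by (simp add: V_def)
  have pos: "\<And>x. x \<in> F0 \<Longrightarrow> x ! (2*n-3) = False"
  proof -
    fix x assume "x \<in> F0"
    then obtain i where i: "i < r" "dc_adj n (w i) x" by (auto simp: F0_def)
    have iL: "i < L" "i \<noteq> 2*n-3" using i rL r n by auto
    from nbr[OF i] show "x ! (2*n-3) = False"
    proof
      assume "x = flip (2*n-2) (w i)"
      then show ?thesis using nth_fw[OF iL(1) rL(4) rL(3)] iL rL(5) by simp
    next
      assume "\<exists>j<n-1. x = flip j (w i)"
      then obtain j where j: "j < n - 1" "x = flip j (w i)" by blast
      have "j < L" "j \<noteq> 2*n-3" using j rL by auto
      then show ?thesis using nth_fw[OF iL(1) _ rL(3)] iL j by simp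
    qed
  qed
  have wnotF: "\<And>k. k < r \<Longrightarrow> w k \<notin> F0"
  proof
    fix k assume k: "k < r" and "w k \<in> F0"
    then obtain i where i: "i < r" "dc_adj n (w i) (w k)" by (auto simp: F0_def)
    have iL: "i < L" "k < L" using i k rL by auto
    obtain j where j: "j < L" "w k = flip j (w i)"
    proof -
      from nbr[OF i(1) i(2)] show ?thesis
      proof
        assume "w k = flip (2*n-2) (w i)"
        then show ?thesis using that[of "2*n-2"] rL by blast
      next
        assume "\<exists>j<n-1. w k = flip j (w i)"
        then obtain j where "j < n - 1" "w k = flip j (w i)" by blast
        moreover have "j < L" using \<open>j < n - 1\<close> rL by linarith
        ultimately show ?thesis using that[of j] by blast
      qed
    qed
    have "w k ! k = True" using nth_w iL by simp
    then have "(k = i) \<noteq> (k = j)" using nth_fw[OF iL(1) j(1) iL(2)] j by simp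
    moreover have "w k ! i = ((i = i) \<noteq> (i = j))" using nth_fw[OF iL(1) j(1) iL(1)] j by simp
    moreover have "w k ! j = ((j = i) \<noteq> (j = j))" using nth_fw[OF iL(1) j(1) j(1)] j by simp
    ultimately show False using nth_w[OF iL(2) iL(1)] nth_w[OF iL(2) j(1)] by auto
  qed
  have iso: "\<And>k x. k < r \<Longrightarrow> E (w k) x \<Longrightarrow> x \<notin> S"
    using F0_def S_def E_def by blast
  define comp where "comp = (\<lambda>x. {y \<in> S. reach_in E S x y})"
  have comps: "components_in E S = comp ` S" by (simp add: components_in_def comp_def)
  have wS: "\<And>k. k < r \<Longrightarrow> w k \<in> S" using wV wnotF by (simp add: S_def)
  have compw: "\<And>k. k < r \<Longrightarrow> comp (w k) = {w k}"
  proof -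
    fix k assume k: "k < r"
    have "\<And>y. reach_in E S (w k) y \<Longrightarrow> y = w k" using reach_isolated iso[OF k] by metis
    then show "comp (w k) = {w k}" using wS[OF k] reach_refl by (auto simp: comp_def)
  qed
  define v1 where "v1 = replicate L True"
  have v1V: "v1 \<in> V" by (simp add: v1_def V_def dc_verts_def L_def)
  have v1F: "v1 \<notin> F0"
  proof
    assume "v1 \<in> F0"
    then have "v1 ! (2*n-3) = False" by (rule pos)
    moreover have "v1 ! (2*n-3) = True" using rL(3) by (simp add: v1_def)
    ultimately show False by simp
  qed
  have v1S: "v1 \<in> S" using v1V v1F by (simp add: S_def)
  have v1w: "\<And>k. k < r \<Longrightarrow> v1 \<noteq> w k"
  proof
    fix k assume k: "k < r" "v1 = w k"
    have "w k ! (2*n-3) = False" using nth_w[of k "2*n-3"] rL rk[OF k(1)] by auto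
    moreover have "v1 ! (2*n-3) = True" using rL(3) by (simp add: v1_def)
    ultimately show False using k(2) by simp
  qed
  have sub: "insert (comp v1) ((\<lambda>k. {w k}) ` {..<r}) \<subseteq> comp ` S"
  proof
    fix C assume "C \<in> insert (comp v1) ((\<lambda>k. {w k}) ` {..<r})"
    then consider "C = comp v1" | k where "k < r" "C = {w k}" by auto
    then show "C \<in> comp ` S"
    proof cases
      case 1 then show ?thesis using v1S by simp
    next
      case 2 then show ?thesis using compw[OF 2(1)] wS[OF 2(1)] by (metis image_eqI)
    qed
  qed
  have injw: "inj_on (\<lambda>k. {w k}) {..<r}"
  proof (rule inj_onI)
    fix i k assume "i \<in> {..<r}" "k \<in> {..<r}" "{w i} = {w k}"
    then show "i = k" using flip_inj[of i u0 k] lu0 rL by (auto simp: w_def)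
  qed
  have notin: "comp v1 \<notin> (\<lambda>k. {w k}) ` {..<r}"
  proof
    assume "comp v1 \<in> (\<lambda>k. {w k}) ` {..<r}"
    then obtain k where "k < r" "comp v1 = {w k}" by auto
    moreover have "v1 \<in> comp v1" using v1S reach_refl by (simp add: comp_def)
    ultimately show False using v1w by auto
  qed
  have finS: "finite S" using finite_verts by (simp add: S_def V_def)
  have cardc: "r + 1 \<le> card (components_in E S)"
  proof -
    have "card (insert (comp v1) ((\<lambda>k. {w k}) ` {..<r})) = r + 1"
      using notin card_image[OF injw] by simp
    then show ?thesis unfolding comps using card_mono[OF finite_imageI[OF finS] sub] by simp
  qed
  have cut: "is_comp_cut (dc_verts n) (dc_adj n) (r + 1) F0"
    unfolding is_comp_cut_def using F0V cardc finS comps by (simp add: V_def E_def S_def)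
  define Pairs where "Pairs = Sigma {..<r} (\<lambda>i. {i<..<n-1})"
  have F0sub: "F0 \<subseteq> insert u0 ((\<lambda>i. flip (2*n-2) (w i)) ` {..<r} \<union> (\<lambda>(i,j). flip j (w i)) ` Pairs)"
  proof
    fix x assume "x \<in> F0"
    then obtain i where i: "i < r" "dc_adj n (w i) x" by (auto simp: F0_def)
    from nbr[OF i] show "x \<in> insert u0 ((\<lambda>i. flip (2*n-2) (w i)) ` {..<r} \<union> (\<lambda>(i,j). flip j (w i)) ` Pairs)"
    proof
      assume "x = flip (2*n-2) (w i)"
      then show ?thesis using i by auto
    next
      assume "\<exists>j<n-1. x = flip j (w i)"
      then obtain j where j: "j < n - 1" "x = flip j (w i)" by blast
      have iL: "i < L" "j < L" using i j rL by auto
      consider "j = i" | "i < j" | "j < i" by linarith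
      then show ?thesis
      proof cases
        case 1
        then have "x = u0" using j iL lu0 by (simp add: w_def flip_flip)
        then show ?thesis by simp
      next
        case 2
        then have "(i, j) \<in> Pairs" using i j by (simp add: Pairs_def)
        then show ?thesis using j by force
      next
        case 3
        have "x = flip i (w j)" using j iL lu0 by (simp add: w_def flip_comm)
        moreover have "(j, i) \<in> Pairs" using 3 i j r by (simp add: Pairs_def)
        ultimately show ?thesis by force
      qed
    qed
  qed
  have cP: "card Pairs = (\<Sum>i<r. n - 2 - i)"
    unfolding Pairs_def by (simp add: card_SigmaI)
  have "card F0 \<le> card (insert u0 ((\<lambda>i. flip (2*n-2) (w i)) ` {..<r} \<union> (\<lambda>(i,j). flip j (w i)) ` Pairs))"
    by (rule card_mono[OF _ F0sub]) (simp add: Pairs_def)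
  also have "\<dots> \<le> 1 + card ((\<lambda>i. flip (2*n-2) (w i)) ` {..<r} \<union> (\<lambda>(i,j). flip j (w i)) ` Pairs)"
    by (simp add: card_insert_if Pairs_def)
  also have "\<dots> \<le> 1 + (card ((\<lambda>i. flip (2*n-2) (w i)) ` {..<r}) + card ((\<lambda>(i,j). flip j (w i)) ` Pairs))"
    using card_Un_le by simp
  also have "\<dots> \<le> 1 + (r + card Pairs)"
    using card_image_le[of "{..<r}" "\<lambda>i. flip (2*n-2) (w i)"] card_image_le[of Pairs "\<lambda>(i,j). flip j (w i)"]
    by (simp add: Pairs_def)
  finally have cF: "card F0 \<le> 1 + r + (\<Sum>i<r. n - 2 - i)" using cP by simp
  have "2 * (\<Sum>i<r. n - 2 - i) + r * (r + 3) = 2 * r * n" using sum_ident r by blast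
  moreover have "r * (r + 3) = r * (r + 1) + 2 * r" by (simp add: algebra_simps)
  ultimately have "2 * card F0 + r * (r + 1) \<le> 2 * r * n + 2" using cF by (rule lin_up)
  then show ?thesis by (intro exI[of _ F0] conjI[OF cut])
qed


lemma fin_lin1: "2*c0 + R \<le> A + 2 \<Longrightarrow> A + 2 \<le> 2*c0 + R \<Longrightarrow> A + 2 \<le> 2*k + R \<Longrightarrow> c0 \<le> (k::nat)"
  by presburger

theorem mainTheorem8:
  fixes n r :: nat
  assumes "n \<ge> 2" and "1 \<le> r" and "r \<le> n - 1"
  shows "int (comp_conn (dc_verts n) (dc_adj n) (r + 1)) = int (r * n) - int (r * (r + 1) div 2) + 1"
proof -
  obtain F0 where F0: "is_comp_cut (dc_verts n) (dc_adj n) (r + 1) F0" "2 * card F0 + r * (r + 1) \<le> 2 * r * n + 2"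
    using upper[OF assms] by blast
  have low: "\<And>F. is_comp_cut (dc_verts n) (dc_adj n) (r + 1) F \<Longrightarrow> 2 * r * n + 2 \<le> 2 * card F + r * (r + 1)"
    using lower[OF assms] by (auto simp: is_comp_cut_def)
  have low0: "2 * r * n + 2 \<le> 2 * card F0 + r * (r + 1)" using low[OF F0(1)] .
  have cc: "comp_conn (dc_verts n) (dc_adj n) (r + 1) = card F0"
    unfolding comp_conn_def
  proof (rule Least_equality)
    show "\<exists>F. is_comp_cut (dc_verts n) (dc_adj n) (r + 1) F \<and> card F = card F0" using F0(1) by blast
  next
    fix k assume "\<exists>F. is_comp_cut (dc_verts n) (dc_adj n) (r + 1) F \<and> card F = k"
    then obtain F where F: "is_comp_cut (dc_verts n) (dc_adj n) (r + 1) F" "card F = k" by blast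
    have "2 * r * n + 2 \<le> 2 * k + r * (r + 1)" using low[OF F(1)] F(2) by simp
    then show "card F0 \<le> k" using fin_lin1[OF F0(2) low0] by blast
  qed
  have "even (r * (r + 1))" by auto
  then obtain q where q: "r * (r + 1) = 2 * q" by (rule evenE)
  have qd: "r * (r + 1) div 2 = q" using q by simp
  have "card F0 + q = r * n + 1" using F0(2) low0 unfolding q by linarith
  then have "int (card F0) = int (r * n) - int q + 1" by linarith
  then show ?thesis using cc qd by simp
qed


end
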